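(* Assume $z_1,z_2\in D$ are in the same chart. If $f$ satisfies the rate conditions of order $0$ and $z_1\in J_{cu}(z_2,L)$, then $\|\pi_{(\lambda,x)}(f(z_1)-f(z_2))\|\ge\xi_{cu,1,P}\|\pi_{(\lambda,x)}(z_1-z_2)\|$.
   Context: $c,u,s$ positive integers, $\Lambda=(\mathbb{R}/\mathbb{Z})^c$, $R_\Lambda=\tfrac12$; points are "in the same chart" if their $\lambda$-components have lifts to $\mathbb{R}^c$ at distance $\le R_\Lambda$; differences, norms, cones and derivatives are computed in such lifts. $\overline B_n(R)$ closed ball at $0$; Euclidean norms. $0<R<R_\Lambda/2$, $D=\Lambda\times\overline B_u(R)\times\overline B_s(R)$, $z=(\lambda,x,y)$, projections $\pi_\lambda,\pi_x,\pi_y,\pi_{(\lambda,x)}$; $f:D\to\Lambda\times\mathbb{R}^u\times\mathbb{R}^s$ is $C^1$, $f=(f_\lambda,f_x,f_y)$. $m(A)=\max\{c:\|Av\|\ge c\|v\|\}$, $m(\mathbf A)=\inf_{A\in\mathbf A}m(A)$; $[\partial g/\partial w(U)]$ = set of matrices with $(i,j)$ entry in $[\inf_U\partial g_i/\partial w_j,\sup_U\partial g_i/\partial w_j]$; $P(z)=\{w\in D:\|\pi_\lambda w-\pi_\lambda z\|\le R_\Lambda/2\}$. Fix $L\in(2R/R_\Lambda,1)$. $\mu_{s,1}=\sup_D\{\|\partial_yf_y\|+\frac1L\|\partial_{(\lambda,x)}f_y\|\}$, $\xi_{u,1,P}=\inf_{z\in D}m[\partial_xf_x(P(z))]-\frac1L\sup_D\|\partial_{(\lambda,y)}f_x\|$,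 $\mu_{cs,1}=\sup_D\{\|\partial_{(\lambda,y)}f_{(\lambda,y)}\|+L\|\partial_xf_{(\lambda,y)}\|\}$, $\xi_{cu,1,P}=\inf_{z\in D}m[\partial_{(\lambda,x)}f_{(\lambda,x)}(P(z))]-L\sup_D\|\partial_yf_{(\lambda,x)}\|$. Rate conditions of order $0$: $\mu_{s,1}<1<\xi_{u,1,P}$, $\mu_{cs,1}<\xi_{u,1,P}$, $\mu_{s,1}<\xi_{cu,1,P}$. $J_{cu}(z,M)=\{(\lambda,x,y):\|y-\pi_yz\|<M\|(\lambda,x)-\pi_{(\lambda,x)}z\|\}\cup\{z\}$. *)

theory Defs
  imports "HOL-Analysis.Analysis"
begin

text \<open>Points of D are represented by lifts (lambda, x, y) in R^c x R^u x R^s.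
  The torus Lambda = (R/Z)^c is handled by working in the universal cover R^c;
  the map f is represented by a lift F which is compatible with the deck
  transformations (see the periodicity hypothesis of the theorem).\<close>

type_synonym ('c,'u,'s) pt = "(real^'c) \<times> (real^'u) \<times> (real^'s)"

definition R_Lambda :: real where "R_Lambda = 1/2"

text \<open>Lift of D = Lambda x closed ball_u(R) x closed ball_s(R).\<close>
definition cyl :: "real \<Rightarrow> ('c::finite,'u::finite,'s::finite) pt set" where
  "cyl R = {z. norm (fst (snd z)) \<le> R \<and> norm (snd (snd z)) \<le> R}"

definition Pset :: "real \<Rightarrow> ('c::finite,'u::finite,'s::finite) pt \<Rightarrow> ('c,'u,'s) pt set" where
  "Pset R z = {w \<in> cyl R. norm (fst w - fst z) \<le> R_Lambda / 2}"

definition pr_lx :: "('c::finite,'u::finite,'s::finite) pt \<Rightarrow> (real^'c) \<times> (real^'u)" where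
  "pr_lx z = (fst z, fst (snd z))"

definition pr_ly :: "('c::finite,'u::finite,'s::finite) pt \<Rightarrow> (real^'c) \<times> (real^'s)" where
  "pr_ly z = (fst z, snd (snd z))"

definition d_y_fy :: "(('c::finite,'u::finite,'s::finite) pt \<Rightarrow> ('c,'u,'s) pt \<Rightarrow>\<^sub>L ('c,'u,'s) pt)
    \<Rightarrow> ('c,'u,'s) pt \<Rightarrow> real^'s \<Rightarrow> real^'s" where
  "d_y_fy F' z = (\<lambda>v. snd (snd (blinfun_apply (F' z) (0, 0, v))))"

definition d_lx_fy :: "(('c::finite,'u::finite,'s::finite) pt \<Rightarrow> ('c,'u,'s) pt \<Rightarrow>\<^sub>L ('c,'u,'s) pt)
    \<Rightarrow> ('c,'u,'s) pt \<Rightarrow> (real^'c) \<times> (real^'u) \<Rightarrow> real^'s" where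
  "d_lx_fy F' z = (\<lambda>v. snd (snd (blinfun_apply (F' z) (fst v, snd v, 0))))"

definition d_x_fx :: "(('c::finite,'u::finite,'s::finite) pt \<Rightarrow> ('c,'u,'s) pt \<Rightarrow>\<^sub>L ('c,'u,'s) pt)
    \<Rightarrow> ('c,'u,'s) pt \<Rightarrow> real^'u \<Rightarrow> real^'u" where
  "d_x_fx F' z = (\<lambda>v. fst (snd (blinfun_apply (F' z) (0, v, 0))))"

definition d_ly_fx :: "(('c::finite,'u::finite,'s::finite) pt \<Rightarrow> ('c,'u,'s) pt \<Rightarrow>\<^sub>L ('c,'u,'s) pt)
    \<Rightarrow> ('c,'u,'s) pt \<Rightarrow> (real^'c) \<times> (real^'s) \<Rightarrow> real^'u" where
  "d_ly_fx F' z = (\<lambda>v. fst (snd (blinfun_apply (F' z) (fst v, 0, snd v))))"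

definition d_ly_fly :: "(('c::finite,'u::finite,'s::finite) pt \<Rightarrow> ('c,'u,'s) pt \<Rightarrow>\<^sub>L ('c,'u,'s) pt)
    \<Rightarrow> ('c,'u,'s) pt \<Rightarrow> (real^'c) \<times> (real^'s) \<Rightarrow> (real^'c) \<times> (real^'s)" where
  "d_ly_fly F' z = (\<lambda>v. pr_ly (blinfun_apply (F' z) (fst v, 0, snd v)))"

definition d_x_fly :: "(('c::finite,'u::finite,'s::finite) pt \<Rightarrow> ('c,'u,'s) pt \<Rightarrow>\<^sub>L ('c,'u,'s) pt)
    \<Rightarrow> ('c,'u,'s) pt \<Rightarrow> real^'u \<Rightarrow> (real^'c) \<times> (real^'s)" where
  "d_x_fly F' z = (\<lambda>v. pr_ly (blinfun_apply (F' z) (0, v, 0)))"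

definition d_lx_flx :: "(('c::finite,'u::finite,'s::finite) pt \<Rightarrow> ('c,'u,'s) pt \<Rightarrow>\<^sub>L ('c,'u,'s) pt)
    \<Rightarrow> ('c,'u,'s) pt \<Rightarrow> (real^'c) \<times> (real^'u) \<Rightarrow> (real^'c) \<times> (real^'u)" where
  "d_lx_flx F' z = (\<lambda>v. pr_lx (blinfun_apply (F' z) (fst v, snd v, 0)))"

definition d_y_flx :: "(('c::finite,'u::finite,'s::finite) pt \<Rightarrow> ('c,'u,'s) pt \<Rightarrow>\<^sub>L ('c,'u,'s) pt)
    \<Rightarrow> ('c,'u,'s) pt \<Rightarrow> real^'s \<Rightarrow> (real^'c) \<times> (real^'u)" where
  "d_y_flx F' z = (\<lambda>v. pr_lx (blinfun_apply (F' z) (0, 0, v)))"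

text \<open>Matrices (w.r.t. the standard orthonormal bases) as entry functions M i j,
  i an output basis vector, j an input basis vector.\<close>
definition mat_apply :: "('w::euclidean_space \<Rightarrow> 'v::euclidean_space \<Rightarrow> real) \<Rightarrow> 'v \<Rightarrow> 'w" where
  "mat_apply M v = (\<Sum>i\<in>Basis. (\<Sum>j\<in>Basis. M i j * (v \<bullet> j)) *\<^sub>R i)"

definition min_norm :: "('v::real_normed_vector \<Rightarrow> 'w::real_normed_vector) \<Rightarrow> real" where
  "min_norm A = Sup {c. \<forall>v. c * norm v \<le> norm (A v)}"

definition min_norm_set :: "('w::euclidean_space \<Rightarrow> 'v::euclidean_space \<Rightarrow> real) set \<Rightarrow> real" where
  "min_norm_set S = (INF M\<in>S. min_norm (mat_apply M))"

text \<open>Interval matrix [dg/dw(U)]: entry (i,j) lies between the inf and sup over U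
  of the partial derivative dg_i/dw_j.\<close>
definition interval_mat :: "('a \<Rightarrow> 'v::euclidean_space \<Rightarrow> 'w::euclidean_space) \<Rightarrow> 'a set
    \<Rightarrow> ('w \<Rightarrow> 'v \<Rightarrow> real) set" where
  "interval_mat B U = {M. \<forall>i\<in>Basis. \<forall>j\<in>Basis.
      (INF w\<in>U. B w j \<bullet> i) \<le> M i j \<and> M i j \<le> (SUP w\<in>U. B w j \<bullet> i)}"

definition mu_s :: "real \<Rightarrow> real \<Rightarrow> (('c::finite,'u::finite,'s::finite) pt \<Rightarrow> ('c,'u,'s) pt \<Rightarrow>\<^sub>L ('c,'u,'s) pt) \<Rightarrow> real" where
  "mu_s R L F' = (SUP z\<in>cyl R. onorm (d_y_fy F' z) + (1/L) * onorm (d_lx_fy F' z))"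

definition xi_u :: "real \<Rightarrow> real \<Rightarrow> (('c::finite,'u::finite,'s::finite) pt \<Rightarrow> ('c,'u,'s) pt \<Rightarrow>\<^sub>L ('c,'u,'s) pt) \<Rightarrow> real" where
  "xi_u R L F' = (INF z\<in>cyl R. min_norm_set (interval_mat (d_x_fx F') (Pset R z)))
      - (1/L) * (SUP z\<in>cyl R. onorm (d_ly_fx F' z))"

definition mu_cs :: "real \<Rightarrow> real \<Rightarrow> (('c::finite,'u::finite,'s::finite) pt \<Rightarrow> ('c,'u,'s) pt \<Rightarrow>\<^sub>L ('c,'u,'s) pt) \<Rightarrow> real" where
  "mu_cs R L F' = (SUP z\<in>cyl R. onorm (d_ly_fly F' z) + L * onorm (d_x_fly F' z))"

definition xi_cu :: "real \<Rightarrow> real \<Rightarrow> (('c::finite,'u::finite,'s::finite) pt \<Rightarrow> ('c,'u,'s) pt \<Rightarrow>\<^sub>L ('c,'u,'s) pt) \<Rightarrow> real" where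
  "xi_cu R L F' = (INF z\<in>cyl R. min_norm_set (interval_mat (d_lx_flx F') (Pset R z)))
      - L * (SUP z\<in>cyl R. onorm (d_y_flx F' z))"

definition Jcu :: "('c::finite,'u::finite,'s::finite) pt \<Rightarrow> real \<Rightarrow> ('c,'u,'s) pt set" where
  "Jcu z M = {w. norm (snd (snd w) - snd (snd z)) < M * norm (pr_lx w - pr_lx z)} \<union> {z}"

end

theory Submission
  imports Defs
begin

lemma nfst: "norm (fst p) \<le> norm p" by (metis norm_fst_le prod.collapse)
lemma nsnd: "norm (snd p) \<le> norm p" by (metis norm_snd_le prod.collapse)

lemma per_int:
  fixes F :: "('c::finite,'u::finite,'s::finite) pt \<Rightarrow> ('c,'u,'s) pt"
    and F' :: "('c,'u,'s) pt \<Rightarrow> ('c,'u,'s) pt \<Rightarrow>\<^sub>L ('c,'u,'s) pt"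
  assumes deriv: "\<forall>z\<in>cyl R. (F has_derivative blinfun_apply (F' z)) (at z within cyl R)"
    and periodic: "\<forall>k l x y. (\<forall>i. k $ i \<in> \<int>) \<longrightarrow> norm x \<le> R \<longrightarrow> norm y \<le> R \<longrightarrow>
        (\<forall>i. (fst (F (l + k, x, y)) - fst (F (l, x, y))) $ i \<in> \<int>) \<and>
        snd (F (l + k, x, y)) = snd (F (l, x, y))"
    and k: "\<forall>i. k $ i \<in> \<int>"
    and z: "norm (fst (snd z)) < R" "norm (snd (snd z)) < R"
  shows "F' (fst z + k, snd z) = F' z"
proof -
  define U :: "('c,'u,'s) pt set" where "U = {w. norm (fst (snd w)) < R \<and> norm (snd (snd w)) < R}"
  have oU: "open U" unfolding U_def
    by (intro open_Collect_conj open_Collect_less continuous_intros)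
  have Ucyl: "U \<subseteq> cyl R" unfolding U_def cyl_def by auto
  have dF: "(F has_derivative blinfun_apply (F' w)) (at w)" if "w \<in> U" for w
  proof -
    have "w \<in> interior (cyl R)" using interior_maximal[OF Ucyl oU] that by auto
    moreover have "(F has_derivative blinfun_apply (F' w)) (at w within cyl R)"
      using deriv Ucyl that by auto
    ultimately show ?thesis using at_within_interior[of w "cyl R"] by simp
  qed
  define c :: "('c,'u,'s) pt" where "c = (k, 0)"
  have T: "(fst w + k, snd w) = w + c" for w :: "('c,'u,'s) pt"
    unfolding c_def by (cases w) auto
  have zU: "z \<in> U" using z unfolding U_def by auto
  have TU: "w + c \<in> U" if "w \<in> U" for w using that unfolding U_def c_def by auto
  define G where "G w = F (w + c) - F w" for w
  have dT: "((\<lambda>w. w + c) has_derivative (\<lambda>h. h)) (at z)"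
    by (intro derivative_eq_intros) auto
  have dG: "(G has_derivative (\<lambda>h. F' (z + c) h - F' z h)) (at z)"
    unfolding G_def
    by (intro has_derivative_diff has_derivative_compose[OF dT, of F, simplified] dF zU TU)
  have cG: "continuous (at z) G" unfolding G_def
    by (intro continuous_intros has_derivative_continuous[OF dF] zU
        continuous_at_compose[of z "\<lambda>w. w + c" F, unfolded o_def] TU)
  obtain d1 where d1: "d1 > 0" "\<forall>w. dist w z < d1 \<longrightarrow> dist (G w) (G z) < 1"
    using cG unfolding continuous_at_eps_delta by (meson zero_less_one)
  obtain d2 where d2: "d2 > 0" "ball z d2 \<subseteq> U" using oU zU open_contains_ball by blast
  define S where "S = ball z (min d1 d2)"
  have Gint: "(\<forall>i. fst (G w) $ i \<in> \<int>) \<and> snd (G w) = 0" if "w \<in> U" for w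
  proof -
    obtain l x y where w: "w = (l, x, y)" by (cases w) auto
    have "norm x \<le> R" "norm y \<le> R" using that w unfolding U_def by auto
    then show ?thesis using periodic k unfolding G_def c_def w by auto
  qed
  have Geq: "G z = G w" if "w \<in> S" for w
  proof -
    have wU: "w \<in> U" using that d2 unfolding S_def by auto
    have dd: "dist (G w) (G z) < 1" proof -
      have "dist w z < d1" using that unfolding S_def by (simp add: dist_commute)
      then show ?thesis using d1(2) by blast
    qed
    have "fst (G w) $ i - fst (G z) $ i = 0" for i
    proof -
      have "\<bar>fst (G w) $ i - fst (G z) $ i\<bar> \<le> norm (fst (G w) - fst (G z))"
        using component_le_norm_cart[of "fst (G w) - fst (G z)" i] by simp
      also have "\<dots> \<le> norm (G w - G z)" using nfst[of "G w - G z"] by simp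
      also have "\<dots> < 1" using dd by (simp add: dist_norm)
      finally have lt: "\<bar>fst (G w) $ i - fst (G z) $ i\<bar> < 1" .
      have "fst (G w) $ i - fst (G z) $ i \<in> \<int>" using Gint[OF wU] Gint[OF zU] by auto
      then obtain n where n: "fst (G w) $ i - fst (G z) $ i = of_int n" by (auto elim: Ints_cases)
      with lt have "\<bar>n\<bar> < 1" by linarith
      then have "n = 0" by simp
      then show ?thesis using n by simp
    qed
    then have "fst (G w) = fst (G z)" by (simp add: vec_eq_iff)
    moreover have "snd (G w) = snd (G z)" using Gint[OF wU] Gint[OF zU] by simp
    ultimately show ?thesis by (simp add: prod_eq_iff)
  qed
  have "((\<lambda>w. G z) has_derivative (\<lambda>h. 0)) (at z)" by simp
  then have dG0: "(G has_derivative (\<lambda>h. 0)) (at z)"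
  proof (rule has_derivative_transform_within_open[of _ _ _ _ S])
    show "open S" unfolding S_def by simp
    show "z \<in> S" unfolding S_def using d1 d2 by simp
    show "\<And>w. w \<in> S \<Longrightarrow> G z = G w" by (rule Geq)
  qed
  have "F' (z + c) = F' z" 
  proof (intro blinfun_eqI)
    fix h show "blinfun_apply (F' (z + c)) h = blinfun_apply (F' z) h"
      using fun_cong[OF has_derivative_unique[OF dG dG0], of h] by simp
  qed
  then show ?thesis using T by simp
qed

lemma per_all:
  fixes F :: "('c::finite,'u::finite,'s::finite) pt \<Rightarrow> ('c,'u,'s) pt"
    and F' :: "('c,'u,'s) pt \<Rightarrow> ('c,'u,'s) pt \<Rightarrow>\<^sub>L ('c,'u,'s) pt"
  assumes R: "0 < R"
    and deriv: "\<forall>z\<in>cyl R. (F has_derivative blinfun_apply (F' z)) (at z within cyl R)"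
    and cont: "continuous_on (cyl R) F'"
    and periodic: "\<forall>k l x y. (\<forall>i. k $ i \<in> \<int>) \<longrightarrow> norm x \<le> R \<longrightarrow> norm y \<le> R \<longrightarrow>
        (\<forall>i. (fst (F (l + k, x, y)) - fst (F (l, x, y))) $ i \<in> \<int>) \<and>
        snd (F (l + k, x, y)) = snd (F (l, x, y))"
    and k: "\<forall>i. k $ i \<in> \<int>"
    and z: "z \<in> cyl R"
  shows "F' (fst z + k, snd z) = F' z"
proof -
  obtain l x y where zz: "z = (l, x, y)" by (cases z) auto
  have xy: "norm x \<le> R" "norm y \<le> R" using z zz unfolding cyl_def by auto
  define s where "s n = 1 - inverse (real (Suc n))" for n
  have s01: "0 \<le> s n" "s n < 1" for n unfolding s_def by (auto simp: field_simps)
  have sl: "s \<longlonglongrightarrow> 1" unfolding s_def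
    using tendsto_diff[OF tendsto_const LIMSEQ_inverse_real_of_nat, of 1] by simp
  define w where "w n = (l, s n *\<^sub>R x, s n *\<^sub>R y)" for n
  define v where "v n = (l + k, s n *\<^sub>R x, s n *\<^sub>R y)" for n
  have lt: "norm (s n *\<^sub>R a) < R" if "norm a \<le> R" for n and a :: "real^'d::finite"
  proof -
    have "norm (s n *\<^sub>R a) = s n * norm a" using s01[of n] by simp
    also have "\<dots> \<le> s n * R" using s01[of n] that by (simp add: mult_left_mono)
    also have "\<dots> < R" using s01[of n] R by simp
    finally show ?thesis .
  qed
  have eq: "F' (v n) = F' (w n)" for n
    using per_int[OF deriv periodic k, of "w n"] lt[OF xy(1), of n] lt[OF xy(2), of n]
    unfolding v_def w_def by simp
  have wc: "w n \<in> cyl R" "v n \<in> cyl R" for n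
    using lt[OF xy(1), of n] lt[OF xy(2), of n] unfolding cyl_def v_def w_def by auto
  have zc: "(l + k, x, y) \<in> cyl R" using xy unfolding cyl_def by auto
  have wl: "w \<longlonglongrightarrow> z" unfolding w_def zz
    using sl by (intro tendsto_intros) (auto intro: tendsto_eq_intros)
  have vl: "v \<longlonglongrightarrow> (l + k, x, y)" unfolding v_def
    using sl by (intro tendsto_intros) (auto intro: tendsto_eq_intros)
  have l1: "(\<lambda>n. F' (w n)) \<longlonglongrightarrow> F' z"
    by (rule continuous_on_tendsto_compose[OF cont wl z]) (simp add: wc)
  have l2: "(\<lambda>n. F' (v n)) \<longlonglongrightarrow> F' (l + k, x, y)"
    by (rule continuous_on_tendsto_compose[OF cont vl zc]) (simp add: wc)
  from l2 have "(\<lambda>n. F' (w n)) \<longlonglongrightarrow> F' (l + k, x, y)" by (simp add: eq)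
  from LIMSEQ_unique[OF this l1] show ?thesis using zz by simp
qed

lemma F'_bounded:
  fixes F :: "('c::finite,'u::finite,'s::finite) pt \<Rightarrow> ('c,'u,'s) pt"
    and F' :: "('c,'u,'s) pt \<Rightarrow> ('c,'u,'s) pt \<Rightarrow>\<^sub>L ('c,'u,'s) pt"
  assumes R: "0 < R"
    and deriv: "\<forall>z\<in>cyl R. (F has_derivative blinfun_apply (F' z)) (at z within cyl R)"
    and cont: "continuous_on (cyl R) F'"
    and periodic: "\<forall>k l x y. (\<forall>i. k $ i \<in> \<int>) \<longrightarrow> norm x \<le> R \<longrightarrow> norm y \<le> R \<longrightarrow>
        (\<forall>i. (fst (F (l + k, x, y)) - fst (F (l, x, y))) $ i \<in> \<int>) \<and>
        snd (F (l + k, x, y)) = snd (F (l, x, y))"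
  shows "\<exists>B. \<forall>z\<in>cyl R. norm (F' z) \<le> B"
proof -
  define K :: "('c,'u,'s) pt set" where "K = cbox 0 (vec 1) \<times> cball 0 R \<times> cball 0 R"
  have cK: "compact K" unfolding K_def by (intro compact_Times compact_cbox compact_cball)
  have Kc: "K \<subseteq> cyl R" unfolding K_def cyl_def by auto
  have "compact (F' ` K)" by (rule compact_continuous_image[OF continuous_on_subset[OF cont Kc] cK])
  then obtain B where B: "\<forall>w\<in>K. norm (F' w) \<le> B"
    using compact_imp_bounded bounded_iff by (metis image_eqI)
  show ?thesis
  proof (intro exI ballI)
    fix z :: "('c,'u,'s) pt" assume z: "z \<in> cyl R"
    define k :: "real^'c" where "k = (\<chi> i. - of_int (floor (fst z $ i)))"
    have k: "\<forall>i. k $ i \<in> \<int>" unfolding k_def by simp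
    have "(fst z + k, snd z) \<in> K"
      using z unfolding K_def cyl_def k_def
      by (cases z) (auto simp: mem_box_cart mem_cball dist_norm mem_Times_iff, linarith+)
    then have "norm (F' (fst z + k, snd z)) \<le> B" using B by blast
    then show "norm (F' z) \<le> B" using per_all[OF R deriv cont periodic k z] by simp
  qed
qed

lemma min_norm_le:
  fixes A :: "'v::euclidean_space \<Rightarrow> 'w::real_normed_vector"
  shows "min_norm A * norm v \<le> norm (A v)"
proof (cases "v = 0")
  case True then show ?thesis by simp
next
  case False
  then have nv: "norm v > 0" by simp
  have "min_norm A \<le> norm (A v) / norm v"
    unfolding min_norm_def
  proof (rule cSup_least)
    show "{c. \<forall>v. c * norm v \<le> norm (A v)} \<noteq> {}" 
    proof -
      have "(0::real) \<in> {c. \<forall>v. c * norm v \<le> norm (A v)}" by simp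
      then show ?thesis by blast
    qed
    fix c assume "c \<in> {c. \<forall>v. c * norm v \<le> norm (A v)}"
    then have "c * norm v \<le> norm (A v)" by simp
    then show "c \<le> norm (A v) / norm v" using nv by (simp add: field_simps)
  qed
  then show ?thesis using nv by (simp add: field_simps)
qed

lemma min_norm_nonneg:
  fixes A :: "'v::euclidean_space \<Rightarrow> 'w::real_normed_vector"
  shows "0 \<le> min_norm A"
proof -
  obtain b :: 'v where b: "b \<in> Basis" using nonempty_Basis by blast
  have "bdd_above {c. \<forall>v. c * norm v \<le> norm (A v)}"
  proof (rule bdd_aboveI)
    fix c assume "c \<in> {c. \<forall>v. c * norm v \<le> norm (A v)}"
    then have "c * norm b \<le> norm (A b)" by simp
    then show "c \<le> norm (A b)" using b by simp
  qed
  then show ?thesis unfolding min_norm_def by (rule cSup_upper[rotated]) simp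
qed

lemma mset_lower:
  fixes S :: "('w::euclidean_space \<Rightarrow> 'v::euclidean_space \<Rightarrow> real) set"
  assumes "M \<in> S" shows "min_norm_set S \<le> min_norm (mat_apply M)"
  unfolding min_norm_set_def
  by (rule cINF_lower[OF _ assms]) (rule bdd_belowI2[where m=0], rule min_norm_nonneg)

lemma mset_nonneg:
  fixes S :: "('w::euclidean_space \<Rightarrow> 'v::euclidean_space \<Rightarrow> real) set"
  assumes "S \<noteq> {}" shows "0 \<le> min_norm_set S"
  unfolding min_norm_set_def
  by (rule cINF_greatest[OF assms]) (rule min_norm_nonneg)

lemma npr: "norm (pr_lx q) \<le> norm q"
proof -
  obtain a b c where q: "q = (a, b, c)" by (cases q) auto
  show ?thesis unfolding q pr_lx_def by (simp add: norm_Pair)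
qed

lemma bl_pr: "bounded_linear pr_lx"
  unfolding pr_lx_def
  by (intro bounded_linear_Pair bounded_linear_fst bounded_linear_compose[OF bounded_linear_fst bounded_linear_snd])

lemma bl_lx:
  fixes F' :: "('c::finite,'u::finite,'s::finite) pt \<Rightarrow> ('c,'u,'s) pt \<Rightarrow>\<^sub>L ('c,'u,'s) pt"
  shows "bounded_linear (d_lx_flx F' w)"
proof -
  have "bounded_linear (\<lambda>v. (fst v, snd v, 0::real^'s) :: ('c,'u,'s) pt)"
    by (intro bounded_linear_Pair bounded_linear_fst bounded_linear_snd bounded_linear_zero)
  then show ?thesis unfolding d_lx_flx_def
    by (intro bounded_linear_compose[OF bl_pr] bounded_linear_compose[OF blinfun.bounded_linear_right])
qed

lemma bl_y:
  fixes F' :: "('c::finite,'u::finite,'s::finite) pt \<Rightarrow> ('c,'u,'s) pt \<Rightarrow>\<^sub>L ('c,'u,'s) pt"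
  shows "bounded_linear (d_y_flx F' w)"
proof -
  have "bounded_linear (\<lambda>v. (0, 0, v) :: ('c,'u,'s) pt)"
    by (intro bounded_linear_Pair bounded_linear_ident bounded_linear_zero)
  then show ?thesis unfolding d_y_flx_def
    by (intro bounded_linear_compose[OF bl_pr] bounded_linear_compose[OF blinfun.bounded_linear_right])
qed

theorem lemma4p7:
  fixes F :: "('c::finite,'u::finite,'s::finite) pt \<Rightarrow> ('c,'u,'s) pt"
    and F' :: "('c,'u,'s) pt \<Rightarrow> ('c,'u,'s) pt \<Rightarrow>\<^sub>L ('c,'u,'s) pt"
    and R L :: real and z1 z2 :: "('c,'u,'s) pt"
  assumes R: "0 < R" "R < R_Lambda / 2"
    and L: "2 * R / R_Lambda < L" "L < 1"
    and deriv: "\<forall>z\<in>cyl R. (F has_derivative blinfun_apply (F' z)) (at z within cyl R)"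
    and cont: "continuous_on (cyl R) F'"
    and periodic: "\<forall>k l x y. (\<forall>i. k $ i \<in> \<int>) \<longrightarrow> norm x \<le> R \<longrightarrow> norm y \<le> R \<longrightarrow>
        (\<forall>i. (fst (F (l + k, x, y)) - fst (F (l, x, y))) $ i \<in> \<int>) \<and>
        snd (F (l + k, x, y)) = snd (F (l, x, y))"
    and z1: "z1 \<in> cyl R" and z2: "z2 \<in> cyl R"
    and chart: "norm (fst z1 - fst z2) \<le> R_Lambda"
    and rate1: "mu_s R L F' < 1" "1 < xi_u R L F'"
    and rate2: "mu_cs R L F' < xi_u R L F'"
    and rate3: "mu_s R L F' < xi_cu R L F'"
    and J: "z1 \<in> Jcu z2 L"
  shows "norm (pr_lx (F z1) - pr_lx (F z2)) \<ge> xi_cu R L F' * norm (pr_lx z1 - pr_lx z2)"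
proof -
  obtain B where B: "\<forall>w\<in>cyl R. norm (F' w) \<le> B"
    using F'_bounded[OF R(1) deriv cont periodic] by blast
  have Lpos: "0 < L" using L(1) R(1) by (simp add: R_Lambda_def)
  define d where "d = z1 - z2"
  define p where "p t = z2 + t *\<^sub>R d" for t :: real
  define v where "v = pr_lx d"
  define u where "u = snd (snd d)"
  have vv: "v = pr_lx z1 - pr_lx z2" unfolding v_def d_def pr_lx_def by simp
  have uu: "u = snd (snd z1) - snd (snd z2)" unfolding u_def d_def by simp
  have nuv: "norm u \<le> L * norm v"
  proof (cases "z1 = z2")
    case True then show ?thesis unfolding uu vv by simp
  next
    case False then show ?thesis using J unfolding Jcu_def uu vv by auto
  qed
  have cvx: "norm ((1 - t) *\<^sub>R a + t *\<^sub>R b) \<le> R" if "t \<in> {0..1}" "norm a \<le> R" "norm b \<le> R"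
    for t and a b :: "real^'d::finite"
  proof -
    have "norm ((1 - t) *\<^sub>R a + t *\<^sub>R b) \<le> (1 - t) * norm a + t * norm b"
      using that(1) by (metis (no_types, lifting) atLeastAtMost_iff abs_of_nonneg diff_ge_0_iff_ge
          norm_scaleR norm_triangle_ineq order_trans)
    also have "\<dots> \<le> (1 - t) * R + t * R"
      using that by (intro add_mono mult_left_mono) auto
    finally show ?thesis by (simp add: algebra_simps)
  qed
  have pexp: "p t = (fst z2 + t *\<^sub>R (fst z1 - fst z2),
      (1 - t) *\<^sub>R fst (snd z2) + t *\<^sub>R fst (snd z1), (1 - t) *\<^sub>R snd (snd z2) + t *\<^sub>R snd (snd z1))" for t
    unfolding p_def d_def by (simp add: algebra_simps prod_eq_iff)
  have pc: "p t \<in> cyl R" if "t \<in> {0..1}" for t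
    using cvx[OF that, of "fst (snd z2)" "fst (snd z1)"] cvx[OF that, of "snd (snd z2)" "snd (snd z1)"]
      z1 z2 unfolding cyl_def pexp by simp
  define mid where "mid = p (1/2)"
  have midc: "mid \<in> cyl R" unfolding mid_def by (rule pc) simp
  have pP: "p t \<in> Pset R mid" if "t \<in> {0..1}" for t
  proof -
    have "fst (p t) - fst mid = (t - 1/2) *\<^sub>R (fst z1 - fst z2)"
      unfolding mid_def pexp by (simp add: algebra_simps)
    then have "norm (fst (p t) - fst mid) = \<bar>t - 1/2\<bar> * norm (fst z1 - fst z2)" by simp
    also have "\<dots> \<le> (1/2) * R_Lambda"
      using that chart by (intro mult_mono) (auto split: abs_split)
    finally show ?thesis unfolding Pset_def using pc[OF that] by simp
  qed
  have ebound: "\<bar>d_lx_flx F' w j \<bullet> i\<bar> \<le> B" if "w \<in> cyl R" "i \<in> Basis" "j \<in> Basis" for w i j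
  proof -
    have "\<bar>d_lx_flx F' w j \<bullet> i\<bar> \<le> norm (d_lx_flx F' w j)" using Basis_le_norm[OF that(2)] .
    also have "\<dots> \<le> norm (blinfun_apply (F' w) (fst j, snd j, 0))" unfolding d_lx_flx_def by (rule npr)
    also have "\<dots> \<le> norm (F' w) * norm (fst j, snd j, 0::real^'s)" by (rule norm_blinfun)
    also have "norm (fst j, snd j, 0::real^'s) = 1"

    proof -
      have "norm (fst j, snd j, 0::real^'s) = norm (fst j, snd j)" by (simp only: norm_Pair norm_zero) simp
      also have "\<dots> = 1" using that(3) by (metis prod.collapse norm_Basis)
      finally show ?thesis .
    qed
    finally show ?thesis using B that(1) by force
  qed
  define S where "S = (SUP z\<in>cyl R. onorm (d_y_flx F' z))"
  have onB: "onorm (d_y_flx F' w) \<le> B" if "w \<in> cyl R" for w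
  proof (rule onorm_le)
    fix x
    have "norm (d_y_flx F' w x) \<le> norm (blinfun_apply (F' w) (0, 0, x))" unfolding d_y_flx_def by (rule npr)
    also have "\<dots> \<le> norm (F' w) * norm (0::real^'c, 0::real^'u, x)" by (rule norm_blinfun)
    also have "\<dots> = norm (F' w) * norm x" by (simp add: norm_Pair)
    also have "\<dots> \<le> B * norm x" using B that by (simp add: mult_right_mono)
    finally show "norm (d_y_flx F' w x) \<le> B * norm x" .
  qed
  have onS: "onorm (d_y_flx F' w) \<le> S" if "w \<in> cyl R" for w
    unfolding S_def by (rule cSUP_upper[OF that]) (rule bdd_aboveI2[where M=B], rule onB)
  have S0: "0 \<le> S" using onS[OF z1] onorm_pos_le[OF bl_y] by (rule order_trans[rotated])
  define mset where "mset z = min_norm_set (interval_mat (d_lx_flx F') (Pset R z))" for z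
  have msnn: "0 \<le> mset z" if "z \<in> cyl R" for z
  proof -
    have zP: "z \<in> Pset R z" using that unfolding Pset_def by (simp add: R_Lambda_def)
    have PC: "Pset R z \<subseteq> cyl R" unfolding Pset_def by auto
    have "(\<lambda>i j. d_lx_flx F' z j \<bullet> i) \<in> interval_mat (d_lx_flx F') (Pset R z)"
      unfolding interval_mat_def
    proof (intro CollectI ballI conjI)
      fix i j :: "(real^'c) \<times> (real^'u)" assume ij: "i \<in> Basis" "j \<in> Basis"
      have bb: "\<bar>d_lx_flx F' w j \<bullet> i\<bar> \<le> B" if "w \<in> Pset R z" for w
        using ebound[OF _ ij] that PC by blast
      show "(INF w\<in>Pset R z. d_lx_flx F' w j \<bullet> i) \<le> d_lx_flx F' z j \<bullet> i"
        by (rule cINF_lower[OF _ zP]) (rule bdd_belowI2[where m="-B"], use bb in force)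
      show "d_lx_flx F' z j \<bullet> i \<le> (SUP w\<in>Pset R z. d_lx_flx F' w j \<bullet> i)"
        by (rule cSUP_upper[OF zP]) (rule bdd_aboveI2[where M="B"], use bb in force)
    qed
    then show ?thesis unfolding mset_def by (intro mset_nonneg) blast
  qed
  have xi_le: "xi_cu R L F' \<le> mset mid - L * S"
  proof -
    have "(INF z\<in>cyl R. mset z) \<le> mset mid"
      by (rule cINF_lower[OF _ midc]) (rule bdd_belowI2[where m=0], rule msnn)
    then show ?thesis unfolding xi_cu_def mset_def S_def by simp
  qed
  have cp: "continuous_on {0..1} p" unfolding p_def by (intro continuous_intros)
  have pcs: "p ` {0..1} \<subseteq> cyl R" using pc by blast
  have cFp: "continuous_on {0..1} (\<lambda>t. F' (p t))" by (rule continuous_on_compose2[OF cont cp pcs])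
  have cq: "continuous_on {0..1} (\<lambda>t. pr_lx (blinfun_apply (F' (p t)) q))" for q
  proof -
    have "continuous_on {0..1} (\<lambda>t. blinfun_apply (F' (p t)) q)"
      by (rule blinfun.continuous_on[OF cFp continuous_on_const])
    then show ?thesis unfolding pr_lx_def by (intro continuous_intros cFp)
  qed
  have hv: "((\<lambda>t. F (p t)) has_vector_derivative blinfun_apply (F' (p t)) d) (at t within {0..1})"
    if "t \<in> {0..1}" for t
  proof -
    have dp: "(p has_derivative (\<lambda>h. h *\<^sub>R d)) (at t within {0..1})"
      unfolding p_def by (intro derivative_eq_intros) auto
    have "((\<lambda>t. F (p t)) has_derivative (\<lambda>h. blinfun_apply (F' (p t)) (h *\<^sub>R d))) (at t within {0..1})"
      by (rule has_derivative_in_compose2[of "cyl R" F "\<lambda>w. blinfun_apply (F' w)", OF _ pcs that dp])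
        (use deriv in blast)
    then show ?thesis unfolding has_vector_derivative_def by (simp add: blinfun.scaleR_right)
  qed
  have hi: "((\<lambda>t. blinfun_apply (F' (p t)) d) has_integral (F z1 - F z2)) {0..1}"
    using fundamental_theorem_of_calculus[of 0 1 "\<lambda>t. F (p t)", OF _ hv] by (simp add: p_def d_def)
  have hi2: "((\<lambda>t. pr_lx (blinfun_apply (F' (p t)) d)) has_integral (pr_lx (F z1) - pr_lx (F z2))) {0..1}"
    using has_integral_linear[OF hi bl_pr] by (simp add: o_def pr_lx_def)
  have spl: "pr_lx (blinfun_apply (F' w) d) = d_lx_flx F' w v + d_y_flx F' w u" for w
  proof -
    have "d = (fst d, fst (snd d), 0) + (0, 0, snd (snd d))" by (simp add: prod_eq_iff)
    then have "blinfun_apply (F' w) d = F' w (fst d, fst (snd d), 0) + F' w (0, 0, snd (snd d))"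
      by (metis blinfun.add_right)
    then show ?thesis unfolding d_lx_flx_def d_y_flx_def v_def u_def pr_lx_def by simp
  qed
  define f1 where "f1 t = d_lx_flx F' (p t) v" for t
  define f2 where "f2 t = d_y_flx F' (p t) u" for t
  have c1: "continuous_on {0..1} f1" unfolding f1_def d_lx_flx_def by (rule cq)
  have c2: "continuous_on {0..1} f2" unfolding f2_def d_y_flx_def by (rule cq)
  have i1: "f1 integrable_on {0..1}" by (rule integrable_continuous_real[OF c1])
  have i2: "f2 integrable_on {0..1}" by (rule integrable_continuous_real[OF c2])
  have "(\<lambda>t. pr_lx (blinfun_apply (F' (p t)) d)) = (\<lambda>t. f1 t + f2 t)"
    by (simp add: spl f1_def f2_def fun_eq_iff)
  with hi2 have hi3: "((\<lambda>t. f1 t + f2 t) has_integral (pr_lx (F z1) - pr_lx (F z2))) {0..1}" by simp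
  have sumI: "pr_lx (F z1) - pr_lx (F z2) = integral {0..1} f1 + integral {0..1} f2"
    using has_integral_unique[OF hi3 has_integral_add[OF integrable_integral[OF i1] integrable_integral[OF i2]]] .
  have bound2: "norm (integral {0..1} f2) \<le> S * norm u"
  proof -
    have f2b: "norm (f2 t) \<le> S * norm u" if "t \<in> {0..1} - {}" for t
    proof -
      have "norm (f2 t) \<le> onorm (d_y_flx F' (p t)) * norm u" unfolding f2_def by (rule onorm[OF bl_y])
      also have "\<dots> \<le> S * norm u" using onS[OF pc] that by (intro mult_right_mono) auto
      finally show ?thesis .
    qed
    have "norm (integral {0..1} f2) \<le> S * norm u * Henstock_Kurzweil_Integration.content {0..1::real}"
      by (rule has_integral_bound_real[OF _ finite.emptyI integrable_integral[OF i2]])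
        (use S0 f2b in auto)
    then show ?thesis by simp
  qed
  define A where "A i j = integral {0..1} (\<lambda>t. d_lx_flx F' (p t) j \<bullet> i)" for i j :: "(real^'c) \<times> (real^'u)"
  have cij: "continuous_on {0..1} (\<lambda>t. d_lx_flx F' (p t) j \<bullet> i)" for i j
    unfolding d_lx_flx_def by (intro continuous_on_inner cq continuous_on_const)
  have PC: "Pset R mid \<subseteq> cyl R" unfolding Pset_def by auto
  have Aint: "A \<in> interval_mat (d_lx_flx F') (Pset R mid)"
    unfolding interval_mat_def
  proof (intro CollectI ballI conjI)
    fix i j :: "(real^'c) \<times> (real^'u)" assume ij: "i \<in> Basis" "j \<in> Basis"
    have bb: "\<bar>d_lx_flx F' w j \<bullet> i\<bar> \<le> B" if "w \<in> Pset R mid" for w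
      using ebound[OF _ ij] that PC by blast
    define lo where "lo = (INF w\<in>Pset R mid. d_lx_flx F' w j \<bullet> i)"
    define hi where "hi = (SUP w\<in>Pset R mid. d_lx_flx F' w j \<bullet> i)"
    have lo: "lo \<le> d_lx_flx F' (p t) j \<bullet> i" if "t \<in> {0..1}" for t
      unfolding lo_def by (rule cINF_lower[OF _ pP[OF that]]) (rule bdd_belowI2[where m="-B"], use bb in force)
    have hi: "d_lx_flx F' (p t) j \<bullet> i \<le> hi" if "t \<in> {0..1}" for t
      unfolding hi_def by (rule cSUP_upper[OF pP[OF that]]) (rule bdd_aboveI2[where M="B"], use bb in force)
    show "lo \<le> A i j" unfolding A_def
      using Henstock_Kurzweil_Integration.integral_le[of "\<lambda>t. lo" "{0..1::real}" "\<lambda>t. d_lx_flx F' (p t) j \<bullet> i"]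
        lo integrable_continuous_real[OF cij] integrable_continuous_real[OF continuous_on_const] by auto
    show "A i j \<le> hi" unfolding A_def
      using Henstock_Kurzweil_Integration.integral_le[of "\<lambda>t. d_lx_flx F' (p t) j \<bullet> i" "{0..1::real}" "\<lambda>t. hi"]
        hi integrable_continuous_real[OF cij] integrable_continuous_real[OF continuous_on_const] by auto
  qed
  have lin: "d_lx_flx F' w v \<bullet> i = (\<Sum>j\<in>Basis. (d_lx_flx F' w j \<bullet> i) * (v \<bullet> j))" for w i
  proof -
    have ln: "linear (d_lx_flx F' w)" by (rule bounded_linear.linear[OF bl_lx])
    have "d_lx_flx F' w v = d_lx_flx F' w (\<Sum>j\<in>Basis. (v \<bullet> j) *\<^sub>R j)" by (simp add: euclidean_representation)
    also have "\<dots> = (\<Sum>j\<in>Basis. (v \<bullet> j) *\<^sub>R d_lx_flx F' w j)"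
      by (simp add: linear_sum[OF ln] linear_scale[OF ln] o_def)
    finally show ?thesis by (simp add: inner_sum_left mult.commute)
  qed
  have matI: "mat_apply A v = integral {0..1} f1"
  proof -
    have "integral {0..1} f1 = (\<Sum>i\<in>Basis. (integral {0..1} f1 \<bullet> i) *\<^sub>R i)"
      by (simp add: euclidean_representation)
    also have "\<dots> = (\<Sum>i\<in>Basis. (\<Sum>j\<in>Basis. A i j * (v \<bullet> j)) *\<^sub>R i)"
    proof (rule sum.cong[OF refl])
      fix i :: "(real^'c) \<times> (real^'u)" assume i: "i \<in> Basis"
      have "integral {0..1} f1 \<bullet> i = integral {0..1} (\<lambda>t. f1 t \<bullet> i)"
        using integral_component_eq[OF i1] by simp
      also have "\<dots> = integral {0..1} (\<lambda>t. \<Sum>j\<in>Basis. (d_lx_flx F' (p t) j \<bullet> i) * (v \<bullet> j))"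
        by (simp add: f1_def lin)
      also have "\<dots> = (\<Sum>j\<in>Basis. integral {0..1} (\<lambda>t. (d_lx_flx F' (p t) j \<bullet> i) * (v \<bullet> j)))"
        by (rule integral_sum) (auto intro!: integrable_continuous_real continuous_intros cij)
      also have "\<dots> = (\<Sum>j\<in>Basis. A i j * (v \<bullet> j))" by (simp add: A_def)
      finally show "(integral {0..1} f1 \<bullet> i) *\<^sub>R i = (\<Sum>j\<in>Basis. A i j * (v \<bullet> j)) *\<^sub>R i" by simp
    qed
    finally show ?thesis unfolding mat_apply_def by simp
  qed
  have m1: "mset mid * norm v \<le> norm (integral {0..1} f1)"
  proof -
    have "mset mid \<le> min_norm (mat_apply A)" unfolding mset_def by (rule mset_lower[OF Aint])
    then have "mset mid * norm v \<le> min_norm (mat_apply A) * norm v" by (rule mult_right_mono) simp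
    also have "\<dots> \<le> norm (mat_apply A v)" by (rule min_norm_le)
    finally show ?thesis using matI by simp
  qed
  have "xi_cu R L F' * norm v \<le> (mset mid - L * S) * norm v" using xi_le by (rule mult_right_mono) simp
  also have "\<dots> = mset mid * norm v - S * (L * norm v)" by (simp add: algebra_simps)
  also have "\<dots> \<le> mset mid * norm v - S * norm u" using nuv S0 by (simp add: mult_left_mono)
  also have "\<dots> \<le> norm (integral {0..1} f1) - norm (integral {0..1} f2)" using m1 bound2 by linarith
  also have "\<dots> \<le> norm (integral {0..1} f1 + integral {0..1} f2)" by (rule norm_diff_ineq)
  finally show ?thesis unfolding sumI vv .
qed

end
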